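(* For every integer $m \geq 1$, the clique number of the graph $\mathrm{Cay}(\tau_m)$ is at least $2^m$.
   Context: Identify $\mathbb{Z}_2^{2m}$ with the integers $0,\dots,4^m-1$ via binary representation, so each $i \in \mathbb{Z}_2^{2m}$ has a base-4 representation with $m$ digits (each base-4 digit being a consecutive pair of bits). Define $\tau_m:\mathbb{Z}_2^{2m}\to\mathbb{Z}_2$ by $\tau_m(i)=1$ if and only if the number of base-4 digits of $i$ equal to $1$ or $2$ is nonzero and the number of base-4 digits of $i$ equal to $1$ is even. The Cayley graph $\mathrm{Cay}(\tau_m)$ is the simple undirected graph with vertex set $\mathbb{Z}_2^{2m}$ in which distinct $i,j$ are adjacent if and only if $\tau_m(i+j)=1$. *)

theory Defs
  imports Main
begin

text \<open>Elements of Z_2^(2m) are identified with the naturals 0..4^m-1 via binary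
representation; group addition is bitwise exclusive or.\<close>

definition digit4 :: "nat \<Rightarrow> nat \<Rightarrow> nat" where
  "digit4 i k = (i div 4 ^ k) mod 4"

definition tau :: "nat \<Rightarrow> nat \<Rightarrow> bool" where
  "tau m i \<longleftrightarrow>
     card {k. k < m \<and> digit4 i k \<in> {1, 2}} \<noteq> 0 \<and>
     even (card {k. k < m \<and> digit4 i k = 1})"

definition cay_adj :: "nat \<Rightarrow> nat \<Rightarrow> nat \<Rightarrow> bool" where
  "cay_adj m i j \<longleftrightarrow> i \<noteq> j \<and> tau m (xor i j)"

definition is_clique :: "nat \<Rightarrow> nat set \<Rightarrow> bool" where
  "is_clique m S \<longleftrightarrow> S \<subseteq> {..<4 ^ m} \<and>
     (\<forall>i\<in>S. \<forall>j\<in>S. i \<noteq> j \<longrightarrow> cay_adj m i j)"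

definition clique_number :: "nat \<Rightarrow> nat" where
  "clique_number m = Max (card ` {S. is_clique m S})"

end

theory Submission
  imports Defs
begin

lemma digit4_bits: "digit4 n k = take_bit 2 (drop_bit (2*k) n)"
  by (simp add: digit4_def take_bit_eq_mod drop_bit_eq_div power_mult)

lemma digit4_xor: "digit4 (xor i j) k = xor (digit4 i k) (digit4 j k)"
  by (simp add: digit4_bits take_bit_xor drop_bit_xor)

lemma digit4_0: "d < 4 \<Longrightarrow> digit4 (4*x + d) 0 = d"
  by (simp add: digit4_def)

lemma digit4_Suc: "d < 4 \<Longrightarrow> digit4 (4*x + d) (Suc k) = digit4 x k"
proof -
  assume "d < 4"
  have "(4*x+d) div 4 ^ Suc k = ((4*x+d) div 4) div 4 ^ k"
    by (simp add: div_mult2_eq)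
  also have "(4*x+d) div 4 = x" using \<open>d<4\<close> by simp
  finally show ?thesis by (simp add: digit4_def)
qed

lemma digit4_div: "digit4 i (Suc k) = digit4 (i div 4) k"
  by (simp add: digit4_def div_mult2_eq)

lemma digits_differ:
  "i < 4^m \<Longrightarrow> j < 4^m \<Longrightarrow> i \<noteq> j \<Longrightarrow> \<exists>k<m. digit4 i k \<noteq> digit4 j k"
proof (induction m arbitrary: i j)
  case 0 then show ?case by simp
next
  case (Suc m)
  show ?case
  proof (cases "i mod 4 = j mod 4")
    case False
    then show ?thesis by (intro exI[of _ 0]) (simp add: digit4_def)
  next
    case True
    have "i div 4 \<noteq> j div 4"
      using True Suc.prems(3) by (metis div_mult_mod_eq)
    moreover have "i div 4 < 4^m" "j div 4 < 4^m" using Suc.prems(1,2)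
      by (simp_all add: less_mult_imp_div_less mult.commute)
    ultimately obtain k where "k < m" "digit4 (i div 4) k \<noteq> digit4 (j div 4) k"
      using Suc.IH by blast
    then show ?thesis by (intro exI[of _ "Suc k"]) (simp add: digit4_div)
  qed
qed

fun T :: "nat \<Rightarrow> nat set" where
  "T 0 = {0}"
| "T (Suc m) = (\<lambda>x. 4*x) ` T m \<union> (\<lambda>x. 4*x+2) ` T m"

lemma T_props: "finite (T m) \<and> card (T m) = 2^m \<and>
  (\<forall>x\<in>T m. x < 4^m \<and> (\<forall>k<m. digit4 x k \<in> {0,2}))"
proof (induction m)
  case 0 then show ?case by simp
next
  case (Suc m)
  have fin: "finite (T m)" and c: "card (T m) = 2^m" using Suc by auto
  have disj: "(\<lambda>x. 4*x) ` T m \<inter> (\<lambda>x. 4*x+2) ` T m = {}" by auto presburger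
  have i1: "inj_on (\<lambda>x::nat. 4*x) (T m)" by (auto simp: inj_on_def)
  have i2: "inj_on (\<lambda>x::nat. 4*x+2) (T m)" by (auto simp: inj_on_def)
  have card: "card (T (Suc m)) = 2^Suc m"
    using fin c disj i1 i2 by (simp add: card_Un_disjoint card_image)
  have el: "\<forall>x\<in>T (Suc m). x < 4^Suc m \<and> (\<forall>k<Suc m. digit4 x k \<in> {0,2})"
  proof
    fix y assume "y \<in> T (Suc m)"
    then have "\<exists>x\<in>T m. y = 4*x + 0 \<or> y = 4*x+2" by auto
    then obtain x where x: "x \<in> T m" "y = 4*x + 0 \<or> y = 4*x+2" by blast
    then obtain d where y: "y = 4*x + d" "d \<in> {0,2}" "x \<in> T m" by blast
    have xl: "x < 4^m" and dx: "\<forall>k<m. digit4 x k \<in> {0,2}" using Suc y(3) by auto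
    have "y < 4^Suc m" using xl y(1,2) by auto
    moreover have "\<forall>k<Suc m. digit4 y k \<in> {0,2}"
    proof (intro allI impI)
      fix k assume "k < Suc m"
      then show "digit4 y k \<in> {0,2}"
        using y dx digit4_0[of d x] digit4_Suc[of d x]
        by (cases k) auto
    qed
    ultimately show "y < 4^Suc m \<and> (\<forall>k<Suc m. digit4 y k \<in> {0,2})" ..
  qed
  show ?case using card el fin by simp
qed

lemma T_clique: "is_clique m (T m)"
  unfolding is_clique_def
proof (intro conjI ballI impI)
  show "T m \<subseteq> {..<4^m}" using T_props by auto
next
  fix i j assume ij: "i \<in> T m" "j \<in> T m" "i \<noteq> j"
  have di: "\<forall>k<m. digit4 i k \<in> {0,2}" and dj: "\<forall>k<m. digit4 j k \<in> {0,2}"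
    and lt: "i < 4^m" "j < 4^m" using T_props ij by auto
  obtain k where k: "k < m" "digit4 i k \<noteq> digit4 j k"
    using digits_differ[OF lt ij(3)] by blast
  have dx: "\<forall>k<m. digit4 (xor i j) k \<in> {0,2}"
  proof (intro allI impI)
    fix k assume "k < m"
    then have "digit4 i k \<in> {0,2}" "digit4 j k \<in> {0,2}" using di dj by auto
    then show "digit4 (xor i j) k \<in> {0,2}" by (auto simp: digit4_xor)
  qed
  have "digit4 i k \<in> {0,2}" "digit4 j k \<in> {0,2}" using di dj k by auto
  then have "digit4 (xor i j) k = 2" using k by (auto simp: digit4_xor)
  then have "k \<in> {k. k < m \<and> digit4 (xor i j) k \<in> {1, 2}}" using k by simp
  moreover have "finite {k. k < m \<and> digit4 (xor i j) k \<in> {1, 2}}" by simp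
  ultimately have "card {k. k < m \<and> digit4 (xor i j) k \<in> {1, 2}} \<noteq> 0"
    by (metis card_0_eq empty_iff)
  moreover have "{k. k < m \<and> digit4 (xor i j) k = 1} = {}" using dx by auto
  then have "even (card {k. k < m \<and> digit4 (xor i j) k = 1})" by (simp only: card.empty even_zero)
  ultimately show "cay_adj m i j" using ij(3) unfolding cay_adj_def tau_def by blast
qed

theorem lemma4:
  fixes m :: nat
  assumes "m \<ge> 1"
  shows "clique_number m \<ge> 2 ^ m"
proof -
  have "{S. is_clique m S} \<subseteq> Pow {..<4^m}" by (auto simp: is_clique_def)
  then have "finite (card ` {S. is_clique m S})" by (meson finite_Pow_iff finite_lessThan finite_subset finite_imageI)
  moreover have "card (T m) \<in> card ` {S. is_clique m S}" using T_clique by auto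
  ultimately have "card (T m) \<le> clique_number m" unfolding clique_number_def by (rule Max_ge)
  then show ?thesis using T_props by simp
qed

end
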